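(* Let $B_1,\dots,B_N$ be the biconnected components of $G$. Then Condition 1 holds if and only if for each $n=1,\dots,N$ there exists an individual $v_n\in V$ who evaluates all alternatives of $B_n$, i.e. $A(B_n)\subseteq A_{v_n}$ (equivalently, $B_n\subseteq G_{v_n}$).
   Context: Let $A$ be a finite set of alternatives and $V$ a finite set of individuals, with $|A|\ge 3$ and $|V|\ge 3$. For each $v\in V$, let $A_v\subseteq A$ be the set of alternatives that $v$ evaluates, with $|A_v|\ge 2$. A graph is identified with its edge set, a set of unordered pairs $ab=\{a,b\}$ of distinct alternatives; a subgraph is a subset of the edge set. For a subgraph $H$, $A(H)$ denotes the set of alternatives appearing in some edge of $H$. Define $G_v=\{ab : a,b\in A_v,\ a\neq b\}$ and $G=\{ab: a,b\in A_v \text{ for some } v\in V,\ a\ne b\}$. A path in $G$ is a set $\{a_1a_2,a_2a_3,\dots,a_{M-1}a_M\}\subseteq G$ with $a_1,\dots,a_M$ distinct; a cycle in $G$ is a set $\{a_1a_2,\dots,a_{M-1}a_M,a_Ma_1\}\subseteq G$ with $a_1,\dots,a_M$ distinct and $M\ge 3$. A nonempty subgraph $H$ is connected if any two vertices of $A(H)$ are joined by a path in $H$. A vertex $a\in A(H)$ is an articulation vertex of $H$ if there are distinct $b,c\in A(H)\setminus\{a\}$ such that every path in $H$ from $b$ to $c$ contains $a$. A subgraph $B\subseteq G$ is biconnected if it consists of a single edge or is connected and has no articulation vertex; a biconnected component of $G$ is a nonempty maximal (under inclusion) biconnected subgraph of $G$ (isolated vertices are not components). Condition 1: for every cycle $C$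 of $G$ there exists $v\in V$ such that $A(C)\subseteq A_v$. *)

theory Defs
  imports Main
begin

text \<open>Graphs are sets of edges; an edge ab is the two-element set {a,b}.\<close>

definition G_ind :: "('v \<Rightarrow> 'a set) \<Rightarrow> 'v \<Rightarrow> 'a set set" where
  "G_ind Av v = {{a, b} | a b. a \<in> Av v \<and> b \<in> Av v \<and> a \<noteq> b}"

definition G_all :: "'v set \<Rightarrow> ('v \<Rightarrow> 'a set) \<Rightarrow> 'a set set" where
  "G_all V Av = {{a, b} | a b. a \<noteq> b \<and> (\<exists>v\<in>V. a \<in> Av v \<and> b \<in> Av v)}"

definition verts :: "'a set set \<Rightarrow> 'a set" where
  "verts H = \<Union> H"

definition path_edges :: "'a list \<Rightarrow> 'a set set" where
  "path_edges xs = {{x, y} | x y. (x, y) \<in> set (zip xs (tl xs))}"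

definition path_list_in :: "'a set set \<Rightarrow> 'a list \<Rightarrow> 'a \<Rightarrow> 'a \<Rightarrow> bool" where
  "path_list_in H xs b c \<longleftrightarrow> xs \<noteq> [] \<and> distinct xs \<and> hd xs = b \<and> last xs = c
      \<and> path_edges xs \<subseteq> H"

definition is_cycle_in :: "'a set set \<Rightarrow> 'a set set \<Rightarrow> bool" where
  "is_cycle_in H C \<longleftrightarrow> (\<exists>xs. distinct xs \<and> length xs \<ge> 3
      \<and> C = path_edges (xs @ [hd xs]) \<and> C \<subseteq> H)"

definition connected_graph :: "'a set set \<Rightarrow> bool" where
  "connected_graph H \<longleftrightarrow> H \<noteq> {} \<and>
     (\<forall>b\<in>verts H. \<forall>c\<in>verts H. \<exists>xs. path_list_in H xs b c)"

definition articulation_vertex :: "'a set set \<Rightarrow> 'a \<Rightarrow> bool" where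
  "articulation_vertex H a \<longleftrightarrow> a \<in> verts H \<and>
     (\<exists>b\<in>verts H - {a}. \<exists>c\<in>verts H - {a}. b \<noteq> c \<and>
        (\<forall>xs. path_list_in H xs b c \<longrightarrow> a \<in> verts (path_edges xs)))"

definition biconnected :: "'a set set \<Rightarrow> bool" where
  "biconnected B \<longleftrightarrow> (\<exists>e. B = {e}) \<or>
     (connected_graph B \<and> (\<forall>a. \<not> articulation_vertex B a))"

definition biconnected_component :: "'a set set \<Rightarrow> 'a set set \<Rightarrow> bool" where
  "biconnected_component G B \<longleftrightarrow> B \<noteq> {} \<and> B \<subseteq> G \<and> biconnected B \<and>
     (\<forall>B'. B \<subseteq> B' \<and> B' \<subseteq> G \<and> biconnected B' \<longrightarrow> B' = B)"

definition condition1 :: "'v set \<Rightarrow> ('v \<Rightarrow> 'a set) \<Rightarrow> bool" where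
  "condition1 V Av \<longleftrightarrow>
     (\<forall>C. is_cycle_in (G_all V Av) C \<longrightarrow> (\<exists>v\<in>V. verts C \<subseteq> Av v))"

end

theory Submission
  imports Defs
begin

lemma pe_Nil[simp]: "path_edges [] = {}"
  by (simp add: path_edges_def)

lemma pe_single[simp]: "path_edges [x] = {}"
  by (simp add: path_edges_def)

lemma pe_Cons2[simp]: "path_edges (x # y # zs) = insert {x, y} (path_edges (y # zs))"
  by (auto simp add: path_edges_def)

lemma pe_Cons: "path_edges (x # zs) = (if zs = [] then {} else insert {x, hd zs} (path_edges zs))"
  by (cases zs) auto

lemma pe_append: "path_edges (l1 @ l2) = path_edges l1 \<union> path_edges l2 \<union>
   (if l1 = [] \<or> l2 = [] then {} else {{last l1, hd l2}})"
proof (induction l1)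
  case Nil then show ?case by simp
next
  case (Cons x l1)
  then show ?case by (cases l1; cases l2) (auto simp: pe_Cons)
qed

lemma pe_rev: "path_edges (rev xs) = path_edges xs"
proof (induction xs)
  case Nil then show ?case by simp
next
  case (Cons x xs)
  then show ?case by (cases xs) (auto simp: pe_append insert_commute)
qed

lemma pe_edge: "e \<in> path_edges xs \<Longrightarrow> distinct xs \<Longrightarrow>
   \<exists>p q. e = {p, q} \<and> p \<in> set xs \<and> q \<in> set xs \<and> p \<noteq> q"
  by (induction xs rule: induct_list012) auto

lemma verts_pe_sub: "verts (path_edges xs) \<subseteq> set xs"
  by (induction xs rule: induct_list012) (auto simp: verts_def)

lemma verts_pe_sup: "length xs \<ge> 2 \<Longrightarrow> set xs \<subseteq> verts (path_edges xs)"
proof (induction xs rule: induct_list012)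
  case (3 x y zs)
  then show ?case by (cases zs) (auto simp: verts_def)
qed auto

lemma sub_path:
  assumes "distinct zs" "b \<in> set zs" "c \<in> set zs"
  shows "\<exists>ws. path_list_in (path_edges zs) ws b c \<and> set ws \<subseteq> set zs"
proof -
  have main: "\<exists>ws. path_list_in (path_edges zs) ws b c \<and> set ws \<subseteq> set zs"
    if h: "distinct zs" "zs = p @ b # q" "c \<in> set (b # q)" for zs p q b c
  proof -
    obtain r s where rs: "b # q = r @ c # s" using split_list[OF h(3)] by blast
    have hd: "hd (r @ [c]) = b" using rs by (cases r) auto
    have "path_edges (r @ [c]) \<subseteq> path_edges (r @ c # s)"
      using pe_append[of "r @ [c]" s] by auto
    also have "\<dots> \<subseteq> path_edges zs" using h(2) rs pe_append[of p "b # q"] by auto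
    finally have "path_edges (r @ [c]) \<subseteq> path_edges zs" .
    moreover have "distinct (r @ [c])" "set (r @ [c]) \<subseteq> set zs" using h rs by auto
    ultimately show ?thesis using hd unfolding path_list_in_def
      by (intro exI[of _ "r @ [c]"]) auto
  qed
  obtain p q where pq: "zs = p @ b # q" using split_list[OF assms(2)] by blast
  show ?thesis
  proof (cases "c \<in> set (b # q)")
    case True then show ?thesis using main[OF assms(1) pq] by blast
  next
    case False
    then have "c \<in> set p" using assms(3) pq by auto
    then obtain p1 p2 where p12: "p = p1 @ c # p2" using split_list by metis
    have "zs = p1 @ c # (p2 @ b # q)" using pq p12 by simp
    then obtain ws where ws: "path_list_in (path_edges zs) ws c b" "set ws \<subseteq> set zs"
      using main[of zs p1 c "p2 @ b # q" b] assms(1) by auto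
    then have "path_list_in (path_edges zs) (rev ws) b c"
      by (auto simp: path_list_in_def pe_rev hd_rev last_rev)
    moreover have "set (rev ws) \<subseteq> set zs" using ws by simp
    ultimately show ?thesis by blast
  qed
qed

lemma cycle_cut:
  assumes "distinct xs" "a \<in> set xs"
  shows "\<exists>zs. distinct zs \<and> set zs = set xs - {a} \<and>
            path_edges zs \<subseteq> path_edges (xs @ [hd xs])"
proof -
  obtain p q where pq: "xs = p @ a # q" using split_list[OF assms(2)] by blast
  have C: "path_edges (xs @ [hd xs]) = path_edges (p @ (a # q @ [hd xs]))" using pq by simp
  have "path_edges p \<subseteq> path_edges (xs @ [hd xs])"
    unfolding C pe_append[of p] by auto
  moreover have "path_edges q \<subseteq> path_edges (xs @ [hd xs])"
    unfolding C pe_append[of p] pe_Cons[of a] pe_append[of q] by auto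
  moreover have "{last q, hd p} \<in> path_edges (xs @ [hd xs])" if "q \<noteq> []" "p \<noteq> []"
  proof -
    have "hd xs = hd p" using pq that by simp
    then show ?thesis unfolding C pe_append[of p] pe_Cons[of a] pe_append[of q] using that by auto
  qed
  ultimately have "path_edges (q @ p) \<subseteq> path_edges (xs @ [hd xs])"
    unfolding pe_append[of q p] by auto
  moreover have "distinct (q @ p)" "set (q @ p) = set xs - {a}" using assms(1) pq by auto
  ultimately show ?thesis by blast
qed

lemma cycle_verts:
  assumes "length xs \<ge> 2"
  shows "verts (path_edges (xs @ [hd xs])) = set xs"
proof -
  have "set (xs @ [hd xs]) = set xs" using assms by (cases xs) auto
  then show ?thesis using verts_pe_sub[of "xs @ [hd xs]"] verts_pe_sup[of "xs @ [hd xs]"] assms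
    by auto
qed

lemma cycle_biconnected:
  assumes "distinct xs" "length xs \<ge> 3"
  shows "biconnected (path_edges (xs @ [hd xs]))"
proof -
  let ?C = "path_edges (xs @ [hd xs])"
  have V: "verts ?C = set xs" using assms by (intro cycle_verts) simp
  have ne: "?C \<noteq> {}" using V assms by (auto simp: verts_def)
  have sub: "path_edges xs \<subseteq> ?C" using pe_append[of xs "[hd xs]"] by auto
  have conn: "connected_graph ?C"
    unfolding connected_graph_def
  proof (intro conjI ne ballI)
    fix b c assume "b \<in> verts ?C" "c \<in> verts ?C"
    then obtain ws where "path_list_in (path_edges xs) ws b c"
      using sub_path[OF assms(1)] V by blast
    then show "\<exists>ws. path_list_in ?C ws b c" using sub unfolding path_list_in_def by blast
  qed
  have "\<not> articulation_vertex ?C a" for a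
  proof
    assume art: "articulation_vertex ?C a"
    then have a: "a \<in> set xs" using V unfolding articulation_vertex_def by auto
    from art obtain b c where bc: "b \<in> set xs - {a}" "c \<in> set xs - {a}" "b \<noteq> c"
      and all: "\<forall>ws. path_list_in ?C ws b c \<longrightarrow> a \<in> verts (path_edges ws)"
      using V unfolding articulation_vertex_def by auto
    obtain zs where zs: "distinct zs" "set zs = set xs - {a}" "path_edges zs \<subseteq> ?C"
      using cycle_cut[OF assms(1) a] by blast
    obtain ws where ws: "path_list_in (path_edges zs) ws b c" "set ws \<subseteq> set zs"
      using sub_path[OF zs(1)] bc zs(2) by blast
    have "path_list_in ?C ws b c" using ws zs(3) unfolding path_list_in_def by blast
    then have "a \<in> verts (path_edges ws)" using all by blast
    then have "a \<in> set ws" using verts_pe_sub[of ws] by blast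
    then show False using ws zs by auto
  qed
  then show ?thesis using conn unfolding biconnected_def by blast
qed

lemma cross_out:
  "ps \<noteq> [] \<Longrightarrow> hd ps \<in> K \<Longrightarrow> last ps \<notin> K \<Longrightarrow>
    \<exists>l1 u w l2. ps = l1 @ u # w # l2 \<and> u \<in> K \<and> w \<notin> K"
proof (induction ps)
  case Nil then show ?case by simp
next
  case (Cons x ps)
  show ?case
  proof (cases "ps = []")
    case True then show ?thesis using Cons by simp
  next
    case False
    show ?thesis
    proof (cases "hd ps \<in> K")
      case True
      then obtain l1 u w l2 where "ps = l1 @ u # w # l2 \<and> u \<in> K \<and> w \<notin> K"
        using Cons False by auto
      then show ?thesis by (intro exI[of _ "x # l1"]) auto
    next
      case f2: False
      then show ?thesis using Cons False
        by (intro exI[of _ "[]"] exI[of _ x] exI[of _ "hd ps"] exI[of _ "tl ps"]) auto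
    qed
  qed
qed

lemma G_all_finite:
  assumes "finite A" "\<And>v. v \<in> V \<Longrightarrow> Av v \<subseteq> A"
  shows "finite (G_all V Av)" "verts (G_all V Av) \<subseteq> A"
proof -
  have "G_all V Av \<subseteq> Pow A" using assms(2) unfolding G_all_def by blast
  then show "finite (G_all V Av)" using assms(1) by (meson finite_Pow_iff finite_subset)
  show "verts (G_all V Av) \<subseteq> A" using assms(2) unfolding G_all_def verts_def by blast
qed

lemma extend:
  assumes c1: "condition1 V Av" and BG: "B \<subseteq> G_all V Av" and conn: "connected_graph B"
    and na: "\<forall>a. \<not> articulation_vertex B a"
    and KB: "K \<subseteq> verts B" and v: "v \<in> V" "K \<subseteq> Av v" and K2: "card K \<ge> 2"
    and fin: "finite K" and ne: "K \<noteq> verts B"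
  shows "\<exists>K' v'. K \<subset> K' \<and> K' \<subseteq> verts B \<and> v' \<in> V \<and> K' \<subseteq> Av v'"
proof -
  obtain x where x: "x \<in> verts B" "x \<notin> K" using KB ne by blast
  obtain k where k: "k \<in> K" using K2 by (cases "K = {}") auto
  have "k \<in> verts B" using KB k by blast
  then obtain ps where ps: "path_list_in B ps k x" using conn x unfolding connected_graph_def by blast
  then obtain l1 k1 y l2 where sp: "ps = l1 @ k1 # y # l2" "k1 \<in> K" "y \<notin> K"
    using cross_out[of ps K] k x unfolding path_list_in_def by auto
  have "{k1,y} \<in> path_edges ps" unfolding sp(1) pe_append by simp
  then have e1: "{k1,y} \<in> B" using ps unfolding path_list_in_def by blast
  then have yB: "y \<in> verts B" and k1B: "k1 \<in> verts B" unfolding verts_def by blast+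
  have "K - {k1} \<noteq> {}"
  proof
    assume "K - {k1} = {}"
    then have "K \<subseteq> {k1}" by blast
    then have "card K \<le> card {k1}" by (intro card_mono) auto
    then show False using K2 by simp
  qed
  then obtain k2 where k2: "k2 \<in> K" "k2 \<noteq> k1" by blast
  have "\<exists>qs. path_list_in B qs y k2 \<and> k1 \<notin> verts (path_edges qs)"
  proof -
    have H: "\<forall>b\<in>verts B - {k1}. \<forall>c\<in>verts B - {k1}. b = c \<or>
            (\<exists>xs. path_list_in B xs b c \<and> k1 \<notin> verts (path_edges xs))"
      using na[rule_format, of k1] k1B unfolding articulation_vertex_def by blast
    have "y \<in> verts B - {k1}" using yB sp(2,3) by blast
    moreover have "k2 \<in> verts B - {k1}" using KB k2 by blast
    moreover have "y \<noteq> k2" using k2 sp(3) by blast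
    ultimately show ?thesis using H by blast
  qed
  then obtain qs where qs: "path_list_in B qs y k2" "k1 \<notin> verts (path_edges qs)" by blast
  have "qs \<noteq> []" using qs unfolding path_list_in_def by blast
  then obtain z0 t where qzt: "qs = z0 # t" by (cases qs) auto
  have "t \<noteq> []"
  proof
    assume "t = []"
    then show False using qs qzt k2 sp(3) unfolding path_list_in_def by auto
  qed
  then have "length qs \<ge> 2" using qzt by (cases t) auto
  then have k1q: "k1 \<notin> set qs" using qs(2) verts_pe_sup[of qs] by blast
  have dq: "distinct qs" using qs unfolding path_list_in_def by blast
  have "\<exists>z\<in>set qs. z \<in> K" using k2 qs \<open>qs \<noteq> []\<close> unfolding path_list_in_def
    by (metis last_in_set)
  then obtain m1 z m2 where sq: "qs = m1 @ z # m2" "z \<in> K" "\<forall>w\<in>set m1. w \<notin> K"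
    using split_list_first_prop[of qs "\<lambda>w. w \<in> K"] by blast
  have hq: "hd qs = y" using qs unfolding path_list_in_def by blast
  have m1ne: "m1 \<noteq> []" using sq hq sp(3) by (cases m1) auto
  have hm1: "hd m1 = y" using sq hq m1ne by simp
  have ym1: "y \<in> set m1" using hm1 m1ne by (metis list.set_sel(1))
  obtain R where R: "distinct R" "set R = K - {k1, z}"
    using finite_distinct_list[of "K - {k1, z}"] fin by auto
  define cs where "cs = k1 # m1 @ z # R"
  have k1z: "k1 \<noteq> z" using k1q sq by auto
  have dcs: "distinct cs" unfolding cs_def using dq sq R k1q k1z by auto
  have lcs: "length cs \<ge> 3" unfolding cs_def using m1ne by (cases m1) auto
  have qB: "path_edges qs \<subseteq> B" using qs unfolding path_list_in_def by blast
  have A1: "path_edges (k1 # m1) \<subseteq> B"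
    using qB e1 hm1 m1ne unfolding pe_Cons[of k1 m1] sq(1) pe_append[of m1] by auto
  have A2: "{last m1, z} \<in> B" using qB m1ne unfolding sq(1) pe_append[of m1] by auto
  have dR: "distinct (z # R @ [k1])" using R k1z by auto
  have A3: "path_edges (z # R @ [k1]) \<subseteq> G_all V Av"
  proof
    fix e assume "e \<in> path_edges (z # R @ [k1])"
    then obtain p q where "e = {p, q}" "p \<in> set (z # R @ [k1])" "q \<in> set (z # R @ [k1])" "p \<noteq> q"
      using pe_edge[OF _ dR] by blast
    moreover have "set (z # R @ [k1]) \<subseteq> Av v" using R sq(2) sp(2) v(2) by auto
    ultimately show "e \<in> G_all V Av" unfolding G_all_def using v(1) by blast
  qed
  have eq: "cs @ [hd cs] = (k1 # m1) @ (z # R @ [k1])" by (simp add: cs_def)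
  have lst: "last (k1 # m1) = last m1" using m1ne by simp
  have CG: "path_edges (cs @ [hd cs]) \<subseteq> G_all V Av"
    unfolding eq pe_append[of "k1 # m1"] lst using A1 A2 A3 BG by auto
  have "is_cycle_in (G_all V Av) (path_edges (cs @ [hd cs]))"
    unfolding is_cycle_in_def using dcs lcs CG by blast
  then obtain v' where v': "v' \<in> V" "verts (path_edges (cs @ [hd cs])) \<subseteq> Av v'"
    using c1 unfolding condition1_def by blast
  have "verts (path_edges (cs @ [hd cs])) = set cs" using lcs by (intro cycle_verts) simp
  moreover have "insert y K \<subseteq> set cs" unfolding cs_def using ym1 R sq(2) sp(2) by auto
  ultimately have "insert y K \<subseteq> Av v'" using v' by blast
  moreover have "K \<subset> insert y K" using sp(3) by blast
  moreover have "insert y K \<subseteq> verts B" using yB KB by blast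
  ultimately show ?thesis using v' by blast
qed

theorem proposition1:
  fixes A :: "'a set" and V :: "'v set" and Av :: "'v \<Rightarrow> 'a set"
  assumes "finite A" and "finite V" and "card A \<ge> 3" and "card V \<ge> 3"
    and "\<And>v. v \<in> V \<Longrightarrow> Av v \<subseteq> A \<and> card (Av v) \<ge> 2"
  shows "condition1 V Av \<longleftrightarrow>
    (\<forall>B. biconnected_component (G_all V Av) B \<longrightarrow>
         (\<exists>v\<in>V. verts B \<subseteq> Av v))"
proof
  have AvA: "\<And>v. v \<in> V \<Longrightarrow> Av v \<subseteq> A" using assms(5) by blast
  note Gfin = G_all_finite[of A V Av, OF assms(1) AvA]
  assume c1: "condition1 V Av"
  show "\<forall>B. biconnected_component (G_all V Av) B \<longrightarrow> (\<exists>v\<in>V. verts B \<subseteq> Av v)"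
  proof (intro allI impI)
    fix B assume comp: "biconnected_component (G_all V Av) B"
    then have Bne: "B \<noteq> {}" and BG: "B \<subseteq> G_all V Av" and bc: "biconnected B"
      unfolding biconnected_component_def by blast+
    show "\<exists>v\<in>V. verts B \<subseteq> Av v"
    proof (cases "\<exists>e. B = {e}")
      case True
      then obtain e where e: "B = {e}" by blast
      then have "e \<in> G_all V Av" using BG by blast
      then obtain a b v where "e = {a, b}" "v \<in> V" "a \<in> Av v" "b \<in> Av v"
        unfolding G_all_def by blast
      then show ?thesis using e unfolding verts_def by auto
    next
      case False
      then have conn: "connected_graph B" and na: "\<forall>a. \<not> articulation_vertex B a"
        using bc unfolding biconnected_def by blast+
      have finB: "finite (verts B)"
        using Gfin(2) BG assms(1) unfolding verts_def by (meson Union_mono finite_subset)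
      obtain e where "e \<in> B" using Bne by blast
      then have eB: "e \<in> B" "e \<in> G_all V Av" using BG by blast+
      then obtain a b v where ab: "e = {a, b}" "a \<noteq> b" "v \<in> V" "a \<in> Av v" "b \<in> Av v"
        unfolding G_all_def by blast
      have IND: "\<forall>K v. card (verts B - K) = n \<longrightarrow> K \<subseteq> verts B \<longrightarrow> v \<in> V \<longrightarrow>
           K \<subseteq> Av v \<longrightarrow> card K \<ge> 2 \<longrightarrow> (\<exists>v'\<in>V. verts B \<subseteq> Av v')" for n
      proof (induction n rule: less_induct)
        case (less n)
        show ?case
        proof (intro allI impI)
          fix K v assume h: "card (verts B - K) = n" "K \<subseteq> verts B" "v \<in> V" "K \<subseteq> Av v"
            "card K \<ge> 2"
          show "\<exists>v'\<in>V. verts B \<subseteq> Av v'"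
          proof (cases "K = verts B")
            case True then show ?thesis using h by blast
          next
            case False
            have finK: "finite K" using h(2) finB finite_subset by blast
            obtain K' v' where K': "K \<subset> K'" "K' \<subseteq> verts B" "v' \<in> V" "K' \<subseteq> Av v'"
              using extend[OF c1 BG conn na h(2,3,4,5) finK False] by blast
            have "verts B - K' \<subset> verts B - K" using K' h(2) by blast
            then have lt: "card (verts B - K') < n" using h(1) finB
              by (metis finite_Diff psubset_card_mono)
            have "card K \<le> card K'" using K' finB finite_subset by (meson card_mono psubset_imp_subset)
            then have "card K' \<ge> 2" using h(5) by linarith
            then show ?thesis using less.IH[OF lt] K' by blast
          qed
        qed
      qed
      have "{a, b} \<subseteq> verts B" using eB ab unfolding verts_def by blast
      moreover have "card {a, b} \<ge> 2" using ab by simp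
      ultimately show ?thesis using IND ab by blast
    qed
  qed
next
  have AvA: "\<And>v. v \<in> V \<Longrightarrow> Av v \<subseteq> A" using assms(5) by blast
  note Gfin = G_all_finite[of A V Av, OF assms(1) AvA]
  assume R: "\<forall>B. biconnected_component (G_all V Av) B \<longrightarrow> (\<exists>v\<in>V. verts B \<subseteq> Av v)"
  show "condition1 V Av" unfolding condition1_def
  proof (intro allI impI)
    fix C assume "is_cycle_in (G_all V Av) C"
    then obtain xs where xs: "distinct xs" "length xs \<ge> 3" "C = path_edges (xs @ [hd xs])"
      "C \<subseteq> G_all V Av" unfolding is_cycle_in_def by blast
    have bcC: "biconnected C" using cycle_biconnected[OF xs(1,2)] xs(3) by simp
    have vC: "verts C = set xs" using xs by (simp add: cycle_verts)
    then have Cne: "C \<noteq> {}" using xs(2) by (auto simp: verts_def)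
    define S where "S = {B'. C \<subseteq> B' \<and> B' \<subseteq> G_all V Av \<and> biconnected B'}"
    have finS: "finite S" unfolding S_def using Gfin(1) by (simp add: finite_subset)
    have CS: "C \<in> S" unfolding S_def using xs(4) bcC by blast
    obtain m where m: "m \<in> S" "C \<subseteq> m" "\<forall>b\<in>S. m \<le> b \<longrightarrow> m = b"
      using finite_has_maximal2[OF finS CS] by blast
    have "biconnected_component (G_all V Av) m"
      unfolding biconnected_component_def
    proof (intro conjI allI impI)
      show "m \<noteq> {}" using m(2) Cne by blast
      show "m \<subseteq> G_all V Av" "biconnected m" using m(1) unfolding S_def by blast+
      fix B' assume "m \<subseteq> B' \<and> B' \<subseteq> G_all V Av \<and> biconnected B'"
      then have "B' \<in> S" "m \<subseteq> B'" using m(2) unfolding S_def by blast+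
      then show "B' = m" using m(3) by blast
    qed
    then obtain v where "v \<in> V" "verts m \<subseteq> Av v" using R by blast
    moreover have "verts C \<subseteq> verts m" using m(2) unfolding verts_def by blast
    ultimately show "\<exists>v\<in>V. verts C \<subseteq> Av v" by blast
  qed
qed

end
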